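(* Let $\ell\le L_1$ be positive integers and $L\ge2$, and let $\mathcal M$ be a $(p,n,L_1)$-multi-labelling of an $L$-graph with $r(\mathcal M)\le L/2$. For $j\in[p]$ let $N^c_j$ be the number of $p$-vertices whose tuple contains $j$. Then $$\sum_{j:\,N^c_j\ge3}N^c_j\le\big(6\Delta(\mathcal M)-6\big)\ell.$$
   Context: An $L$-graph is a cycle with $2L$ vertices alternating between $n$-vertices and $p$-vertices. A $(p,n,L_1)$-multi-labelling assigns an $n$-label in $[n]$ to each $n$-vertex and a tuple of $d_r$ distinct $p$-labels in $[p]$ ($\ell\le d_r\le L_1$) to the $r$-th $p$-vertex, such that the $n$-label of each $n$-vertex differs from those of the $n$-vertices immediately preceding and following it in the cycle, and for each $n$-label $i$ and $p$-label $j$ the number of edges with $n$-endpoint labelled $i$ and $p$-endpoint's tuple containing $j$ is $0$ or $\ge2$. $r(\mathcal M)$ and $c(\mathcal M)$ are the numbers of distinct $n$- and $p$-labels, and $\Delta(\mathcal M)=1+\frac L2+\sum_{r=1}^L\frac{d_r}{2\ell}-r(\mathcal M)-\frac{c(\mathcal M)}{\ell}$. *)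

theory Defs
  imports Main "HOL-Library.Library"
begin

text \<open>An L-graph: the cycle v_0, w_0, v_1, w_1, ..., v_(L-1), w_(L-1), v_0 with
  n-vertices v_r and p-vertices w_r (indices r < L).  The p-vertex w_r is adjacent
  to the n-vertices v_r and v_((r+1) mod L).  A labelling is given by
  NL r (the n-label of v_r) and PL r (the set of p-labels of w_r; the tuple of
  distinct labels is represented by its underlying set, d_r = card (PL r)).\<close>

definition nxt :: "nat \<Rightarrow> nat \<Rightarrow> nat" where
  "nxt L r = Suc r mod L"

definition edge_count :: "nat \<Rightarrow> (nat \<Rightarrow> nat) \<Rightarrow> (nat \<Rightarrow> nat set) \<Rightarrow> nat \<Rightarrow> nat \<Rightarrow> nat" where
  "edge_count L NL PL i j =
     card {r. r < L \<and> NL r = i \<and> j \<in> PL r} + card {r. r < L \<and> NL (nxt L r) = i \<and> j \<in> PL r}"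

definition multi_labelling ::
  "nat \<Rightarrow> nat \<Rightarrow> nat \<Rightarrow> nat \<Rightarrow> nat \<Rightarrow> (nat \<Rightarrow> nat) \<Rightarrow> (nat \<Rightarrow> nat set) \<Rightarrow> bool" where
  "multi_labelling p n L1 ell L NL PL \<longleftrightarrow>
     (\<forall>r<L. NL r \<in> {1..n}) \<and>
     (\<forall>r<L. PL r \<subseteq> {1..p} \<and> ell \<le> card (PL r) \<and> card (PL r) \<le> L1) \<and>
     (\<forall>r<L. NL r \<noteq> NL (nxt L r)) \<and>
     (\<forall>i j. edge_count L NL PL i j = 0 \<or> edge_count L NL PL i j \<ge> 2)"

definition r_num :: "nat \<Rightarrow> (nat \<Rightarrow> nat) \<Rightarrow> nat" where
  "r_num L NL = card (NL ` {..<L})"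

definition c_num :: "nat \<Rightarrow> (nat \<Rightarrow> nat set) \<Rightarrow> nat" where
  "c_num L PL = card (\<Union>r<L. PL r)"

definition Delta :: "nat \<Rightarrow> nat \<Rightarrow> (nat \<Rightarrow> nat) \<Rightarrow> (nat \<Rightarrow> nat set) \<Rightarrow> real" where
  "Delta ell L NL PL = 1 + real L / 2 + (\<Sum>r<L. real (card (PL r)) / (2 * real ell))
      - real (r_num L NL) - real (c_num L PL) / real ell"

definition Nc :: "nat \<Rightarrow> (nat \<Rightarrow> nat set) \<Rightarrow> nat \<Rightarrow> nat" where
  "Nc L PL j = card {r. r < L \<and> j \<in> PL r}"

end

theory Submission
  imports Defs
begin

lemma Nc_not1:
  assumes "2 \<le> L" and hML: "multi_labelling p n L1 ell L NL PL"
  shows "Nc L PL j \<noteq> 1"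
proof
  assume "Nc L PL j = 1"
  then obtain r0 where S: "{r. r < L \<and> j \<in> PL r} = {r0}"
    unfolding Nc_def by (auto simp: card_Suc_eq)
  hence r0: "r0 < L" "j \<in> PL r0" by auto
  have A: "{r. r < L \<and> NL r = NL r0 \<and> j \<in> PL r} = {r0}" using S by auto
  have nn: "NL r0 \<noteq> NL (nxt L r0)" using hML r0 unfolding multi_labelling_def by auto
  have B: "{r. r < L \<and> NL (nxt L r) = NL r0 \<and> j \<in> PL r} = {}"
  proof -
    { fix r assume "r < L" "NL (nxt L r) = NL r0" "j \<in> PL r"
      hence "r = r0" using S by auto
      hence False using nn \<open>NL (nxt L r) = NL r0\<close> by simp }
    thus ?thesis by auto
  qed
  have "edge_count L NL PL (NL r0) j = 1" unfolding edge_count_def A B by simp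
  moreover have "edge_count L NL PL (NL r0) j = 0 \<or> edge_count L NL PL (NL r0) j \<ge> 2"
    using hML unfolding multi_labelling_def by blast
  ultimately show False by simp
qed

theorem lemmaC4:
  fixes p n L1 ell L :: nat and NL :: "nat \<Rightarrow> nat" and PL :: "nat \<Rightarrow> nat set"
  assumes "0 < ell" and "ell \<le> L1" and "2 \<le> L"
    and "multi_labelling p n L1 ell L NL PL"
    and "real (r_num L NL) \<le> real L / 2"
  shows "real (\<Sum>j\<in>{j\<in>{1..p}. Nc L PL j \<ge> 3}. Nc L PL j)
           \<le> (6 * Delta ell L NL PL - 6) * real ell"
proof -
  note hML = assms(4)
  have sub: "\<And>r. r < L \<Longrightarrow> PL r \<subseteq> {1..p}" using hML unfolding multi_labelling_def by auto
  define S where "S = (\<Sum>r<L. card (PL r))"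
  have NcS: "\<And>j. Nc L PL j = (\<Sum>r<L. if j \<in> PL r then 1 else 0)"
    unfolding Nc_def by (simp add: sum.If_cases Int_def conj_commute lessThan_def)
  have cardS: "\<And>r. r < L \<Longrightarrow> card (PL r) = (\<Sum>j\<in>{1..p}. if j \<in> PL r then 1 else 0)"
  proof -
    fix r assume "r < L"
    hence "{1..p} \<inter> {j. j \<in> PL r} = PL r" using sub by auto
    thus "card (PL r) = (\<Sum>j\<in>{1..p}. if j \<in> PL r then 1 else (0::nat))"
      by (simp add: sum.If_cases)
  qed
  have S_eq: "S = (\<Sum>j\<in>{1..p}. Nc L PL j)"
    unfolding S_def NcS using cardS by (simp add: sum.swap[of _ "{..<L}"])
  have U: "(\<Union>r<L. PL r) = {j\<in>{1..p}. 1 \<le> Nc L PL j}"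
  proof -
    have "\<And>j. 1 \<le> Nc L PL j \<longleftrightarrow> (\<exists>r<L. j \<in> PL r)"
      unfolding Nc_def by (auto simp: Suc_le_eq card_gt_0_iff)
    thus ?thesis using sub by fastforce
  qed
  have c_eq: "c_num L PL = (\<Sum>j\<in>{1..p}. if 1 \<le> Nc L PL j then 1 else 0)"
    unfolding c_num_def U by (simp add: sum.If_cases Int_def conj_commute)
  have lhs: "(\<Sum>j\<in>{j\<in>{1..p}. Nc L PL j \<ge> 3}. Nc L PL j)
      = (\<Sum>j\<in>{1..p}. if 3 \<le> Nc L PL j then Nc L PL j else 0)"
    by (simp add: sum.If_cases Int_def conj_commute)
  have pt: "\<And>j. j \<in> {1..p} \<Longrightarrow> real (if 3 \<le> Nc L PL j then Nc L PL j else 0)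
     \<le> 3 * real (Nc L PL j) - 6 * real (if 1 \<le> Nc L PL j then 1 else (0::nat))"
  proof -
    fix j
    have "Nc L PL j \<noteq> 1" using Nc_not1[OF assms(3) hML] .
    thus "?thesis j" by auto
  qed
  have key: "real (\<Sum>j\<in>{j\<in>{1..p}. Nc L PL j \<ge> 3}. Nc L PL j) \<le> 3 * real S - 6 * real (c_num L PL)"
  proof -
    have "real (\<Sum>j\<in>{j\<in>{1..p}. Nc L PL j \<ge> 3}. Nc L PL j)
       \<le> (\<Sum>j\<in>{1..p}. 3 * real (Nc L PL j) - 6 * real (if 1 \<le> Nc L PL j then 1 else (0::nat)))"
      unfolding lhs of_nat_sum by (rule sum_mono) (rule pt)
    also have "\<dots> = 3 * real S - 6 * real (c_num L PL)"
      unfolding S_eq c_eq of_nat_sum by (simp add: sum_subtractf sum_distrib_left)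
    finally show ?thesis .
  qed
  have sumd: "(\<Sum>r<L. real (card (PL r)) / (2 * real ell)) = real S / (2 * real ell)"
    unfolding S_def of_nat_sum by (simp add: sum_divide_distrib)
  have "(6 * Delta ell L NL PL - 6) * real ell
      = 3 * real L * real ell + 3 * real S - 6 * real (r_num L NL) * real ell - 6 * real (c_num L PL)"
    unfolding Delta_def sumd using assms(1) by (simp add: field_simps)
  moreover have "6 * real (r_num L NL) * real ell \<le> 3 * real L * real ell"
    using assms(5) by (simp add: mult_right_mono)
  ultimately show ?thesis using key by linarith
qed

end
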